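(* For $q\in\{4,5\}$, the natural action of $\mathrm{PGL}_2(\mathbb{F}_q)$ on the projective line $\mathbb{P}^1(\mathbb{F}_q)$ cannot be sequenced.
   Context: $\mathrm{PGL}_2(\mathbb{F}_q)$ is the quotient of $\mathrm{GL}_2(\mathbb{F}_q)$ by the nonzero scalar matrices; it acts on $\mathbb{P}^1(\mathbb{F}_q)=\mathbb{F}_q\cup\{\infty\}$ by fractional linear transformations $z\mapsto (az+b)/(cz+d)$, and this action is sharply $3$-transitive (for any two ordered triples of distinct points there is exactly one group element mapping the first to the second). For a group $G$ acting sharply $k$-transitively on an $n$-element set $X$, a sequencing of $X$ is an enumeration $(x_1,\ldots,x_n)$ of all elements of $X$ such that the $n-k$ tuples $(x_1,\ldots,x_{k+1}),\ldots,(x_{n-k},\ldots,x_n)$ lie in pairwise distinct orbits of $G$ acting coordinatewise on ordered $(k+1)$-tuples of distinct elements of $X$. Here $n=q+1$ and $k=3$. *)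

theory Defs
  imports Main
begin

text \<open>The projective line over a field 'a is modelled as 'a option:
  None is the point at infinity, Some z the affine point z.\<close>

definition mobius :: "'a::field \<Rightarrow> 'a \<Rightarrow> 'a \<Rightarrow> 'a \<Rightarrow> 'a option \<Rightarrow> 'a option" where
  "mobius a b c d p =
     (case p of
        None \<Rightarrow> (if c = 0 then None else Some (a / c))
      | Some z \<Rightarrow> (if c * z + d = 0 then None else Some ((a * z + b) / (c * z + d))))"

text \<open>PGL_2 as the group of permutations of the projective line given by
  fractional linear transformations (scalar matrices act trivially).\<close>

definition PGL2 :: "('a::field option \<Rightarrow> 'a option) set" where
  "PGL2 = {mobius a b c d | a b c d. a * d - b * c \<noteq> 0}"

definition sequencing :: "('b \<Rightarrow> 'b) set \<Rightarrow> nat \<Rightarrow> 'b list \<Rightarrow> bool" where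
  "sequencing G k xs \<longleftrightarrow>
     distinct xs \<and> set xs = UNIV \<and>
     (\<forall>i j. i < j \<and> j < length xs - k \<longrightarrow>
        \<not> (\<exists>g\<in>G. map g (take (k + 1) (drop i xs)) = take (k + 1) (drop j xs)))"

end

theory Submission
  imports Defs
begin
lemma mob_comp:
  fixes a b c d a' b' c' d' :: "'a::field"
  assumes "a*d-b*c \<noteq> 0" "a'*d'-b'*c' \<noteq> 0"
  shows "mobius a b c d (mobius a' b' c' d' p) =
    mobius (a*a'+b*c') (a*b'+b*d') (c*a'+d*c') (c*b'+d*d') p"
proof (cases p)
  case None
  show ?thesis
  proof (cases "c' = 0")
    case True
    then have "a' \<noteq> 0" using assms(2) by auto
    then show ?thesis using None True by (auto simp: mobius_def)
  next
    case False
    have e: "c * a' / c' + d = (c*a'+d*c')/c'" using False by (simp add: field_simps)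
    have f: "a * a' / c' + b = (a*a'+b*c')/c'" using False by (simp add: field_simps)
    have g: "((a*a'+b*c')/c') / ((c*a'+d*c')/c') = (a*a'+b*c')/(c*a'+d*c')" using False by simp
    show ?thesis using None False by (auto simp: mobius_def e f g)
  qed
next
  case (Some z)
  show ?thesis
  proof (cases "c'*z+d' = 0")
    case True
    have u: "a'*z+b' \<noteq> 0"
    proof
      assume "a'*z+b' = 0"
      then have "a'*(c'*z+d') - c'*(a'*z+b') = 0" using True by simp
      then have "a'*d'-b'*c' = 0" by (simp add: algebra_simps)
      then show False using assms(2) by simp
    qed
    have d': "d' = - c'*z" using True by (simp add: eq_neg_iff_add_eq_0 add.commute)
    have e: "(c*a'+d*c')*z + (c*b'+d*d') = c*(a'*z+b')"
      unfolding d' by (simp add: algebra_simps)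
    have f: "(a*a'+b*c')*z + (a*b'+b*d') = a*(a'*z+b')"
      unfolding d' by (simp add: algebra_simps)
    have lhs: "mobius a b c d (mobius a' b' c' d' p) = mobius a b c d None"
      using Some True by (simp add: mobius_def)
    show ?thesis unfolding lhs using Some u by (simp add: mobius_def e f)
  next
    case False
    define w where "w = (a'*z+b')/(c'*z+d')"
    have lhs: "mobius a b c d (mobius a' b' c' d' p) = mobius a b c d (Some w)"
      using Some False by (simp add: mobius_def w_def)
    have e: "c * w + d = ((c*a'+d*c')*z + (c*b'+d*d'))/(c'*z+d')"
      using False unfolding w_def by (simp add: field_simps)
    have f: "a * w + b = ((a*a'+b*c')*z + (a*b'+b*d'))/(c'*z+d')"
      using False unfolding w_def by (simp add: field_simps)
    show ?thesis unfolding lhs using Some False by (simp add: mobius_def e f)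
  qed
qed

lemma mob_id: "k \<noteq> 0 \<Longrightarrow> mobius k 0 0 k p = p"
  by (cases p) (auto simp: mobius_def)

lemma mob_inv:
  fixes a b c d :: "'a::field"
  assumes "a*d-b*c \<noteq> 0"
  shows "mobius d (-b) (-c) a (mobius a b c d p) = p"
proof -
  have "d*a - (-b)*(-c) \<noteq> 0" using assms by (simp add: algebra_simps)
  then have "mobius d (-b) (-c) a (mobius a b c d p) = mobius (d*a+(-b)*c) (d*b+(-b)*d) ((-c)*a+a*c) ((-c)*b+a*d) p"
    using mob_comp assms by blast
  also have "\<dots> = mobius (a*d-b*c) 0 0 (a*d-b*c) p" by (simp add: algebra_simps)
  also have "\<dots> = p" using mob_id assms by blast
  finally show ?thesis .
qed

lemma mob_inv2:
  fixes a b c d :: "'a::field"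
  assumes "a*d-b*c \<noteq> 0"
  shows "mobius a b c d (mobius d (-b) (-c) a p) = p"
proof -
  have "d*a - (-b)*(-c) \<noteq> 0" using assms by (simp add: algebra_simps)
  then have "mobius a b c d (mobius d (-b) (-c) a p) = mobius (a*d+b*(-c)) (a*(-b)+b*a) (c*d+d*(-c)) (c*(-b)+d*a) p"
    using mob_comp assms by blast
  also have "\<dots> = mobius (a*d-b*c) 0 0 (a*d-b*c) p" by (simp add: algebra_simps)
  also have "\<dots> = p" using mob_id assms by blast
  finally show ?thesis .
qed

lemma trans3:
  fixes p1 p2 p3 :: "'a::field option"
  assumes "p1 \<noteq> p2" "p1 \<noteq> p3" "p2 \<noteq> p3"
  shows "\<exists>a b c d. a*d-b*c \<noteq> 0 \<and> mobius a b c d p1 = None \<and>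
     mobius a b c d p2 = Some 0 \<and> mobius a b c d p3 = Some 1"
proof (cases p1)
  case None
  then obtain y z where y: "p2 = Some y" and z: "p3 = Some z" using assms by (cases p2; cases p3) auto
  have yz: "y \<noteq> z" using assms y z by auto
  then have "1*(z-y) - (-y)*0 \<noteq> (0::'a)" by simp
  moreover have "mobius 1 (-y) 0 (z-y) p1 = None \<and> mobius 1 (-y) 0 (z-y) p2 = Some 0 \<and> mobius 1 (-y) 0 (z-y) p3 = Some 1"
    using None y z yz by (simp add: mobius_def)
  ultimately show ?thesis by blast
next
  case (Some x)
  show ?thesis
  proof (cases p2)
    case None
    then obtain z where z: "p3 = Some z" using assms by (cases p3) auto
    have xz: "x \<noteq> z" using assms z Some by auto
    then have "0*(-x) - (z-x)*1 \<noteq> (0::'a)" by simp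
    moreover have "mobius 0 (z-x) 1 (-x) p1 = None \<and> mobius 0 (z-x) 1 (-x) p2 = Some 0 \<and> mobius 0 (z-x) 1 (-x) p3 = Some 1"
      using None Some z xz by (simp add: mobius_def)
    ultimately show ?thesis by blast
  next
    case (Some y)
    note x = \<open>p1 = Some x\<close>
    show ?thesis
    proof (cases p3)
      case None
      have xy: "x \<noteq> y" using assms x Some by auto
      then have "1*(-x) - (-y)*1 \<noteq> (0::'a)" by simp
      moreover have "mobius 1 (-y) 1 (-x) p1 = None \<and> mobius 1 (-y) 1 (-x) p2 = Some 0 \<and> mobius 1 (-y) 1 (-x) p3 = Some 1"
        using None Some x xy by (simp add: mobius_def)
      ultimately show ?thesis by blast
    next
      case z: (Some z)
      have xy: "x \<noteq> y" "x \<noteq> z" "y \<noteq> z" using assms x Some z by auto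
      have "(z-x)*(-x*(z-y)) - (-y*(z-x))*(z-y) = (z-x)*(z-y)*(y-x)" by (simp add: algebra_simps)
      then have "(z-x)*(-x*(z-y)) - (-y*(z-x))*(z-y) \<noteq> 0" using xy by simp
      moreover have "mobius (z-x) (-y*(z-x)) (z-y) (-x*(z-y)) p1 = None"
        using x by (simp add: mobius_def algebra_simps)
      moreover have "mobius (z-x) (-y*(z-x)) (z-y) (-x*(z-y)) p2 = Some 0"
      proof -
        have "(z-y)*y + (-x*(z-y)) = (z-y)*(y-x)" by (simp add: algebra_simps)
        moreover have "(z-x)*y + (-y*(z-x)) = 0" by (simp add: algebra_simps)
        ultimately show ?thesis using Some xy by (simp add: mobius_def)
      qed
      moreover have "mobius (z-x) (-y*(z-x)) (z-y) (-x*(z-y)) p3 = Some 1"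
      proof -
        have "(z-y)*z + (-x*(z-y)) = (z-y)*(z-x)" by (simp add: algebra_simps)
        moreover have "(z-x)*z + (-y*(z-x)) = (z-y)*(z-x)" by (simp add: algebra_simps)
        ultimately show ?thesis using z xy by (simp add: mobius_def)
      qed
      ultimately show ?thesis by blast
    qed
  qed
qed

lemma comp_PGL2:
  assumes "f \<in> PGL2" "g \<in> PGL2"
  shows "f \<circ> g \<in> PGL2"
proof -
  obtain a b c d where f: "f = mobius a b c d" "a*d-b*c \<noteq> 0" using assms(1) unfolding PGL2_def by blast
  obtain a' b' c' d' where g: "g = mobius a' b' c' d'" "a'*d'-b'*c' \<noteq> 0" using assms(2) unfolding PGL2_def by blast
  have "f \<circ> g = mobius (a*a'+b*c') (a*b'+b*d') (c*a'+d*c') (c*b'+d*d')"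
    using f g mob_comp by fastforce
  moreover have "(a*a'+b*c')*(c*b'+d*d') - (a*b'+b*d')*(c*a'+d*c') = (a*d-b*c)*(a'*d'-b'*c')"
    by (simp add: algebra_simps)
  then have "(a*a'+b*c')*(c*b'+d*d') - (a*b'+b*d')*(c*a'+d*c') \<noteq> 0" using f g by simp
  ultimately show ?thesis unfolding PGL2_def by blast
qed

lemma seq_transfer:
  fixes a b c d :: "'a::field"
  assumes sq: "sequencing PGL2 k xs" and det: "a*d-b*c \<noteq> 0"
  shows "sequencing PGL2 k (map (mobius a b c d) xs)"
proof -
  define g where "g = mobius a b c d"
  define gi where "gi = mobius d (-b) (-c) a"
  have gig: "gi (g p) = p" for p unfolding g_def gi_def using mob_inv det by blast
  have ggi: "g (gi p) = p" for p unfolding g_def gi_def using mob_inv2 det by blast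
  have gP: "g \<in> PGL2" unfolding g_def PGL2_def using det by blast
  have "d*a-(-b)*(-c) \<noteq> 0" using det by (simp add: algebra_simps)
  then have giP: "gi \<in> PGL2" unfolding gi_def PGL2_def by blast
  have inj: "inj g" by (metis gig injI)
  have d1: "distinct (map g xs)" using sq unfolding sequencing_def distinct_map
    using inj_on_subset[OF inj] by blast
  have "surj g" using ggi by (rule surjI)
  then have s1: "set (map g xs) = UNIV" using sq unfolding sequencing_def by simp
  have o1: "\<not> (\<exists>h\<in>PGL2. map h (take (k + 1) (drop i (map g xs))) = take (k + 1) (drop j (map g xs)))"
    if ij: "i < j" "j < length (map g xs) - k" for i j
  proof
    assume "\<exists>h\<in>PGL2. map h (take (k + 1) (drop i (map g xs))) = take (k + 1) (drop j (map g xs))"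
    then obtain h where h: "h \<in> PGL2" "map h (take (k + 1) (drop i (map g xs))) = take (k + 1) (drop j (map g xs))" by blast
    have "map gi (map h (map g (take (k + 1) (drop i xs)))) = map gi (map g (take (k + 1) (drop j xs)))"
      using h(2) by (simp add: take_map drop_map)
    then have "map (gi \<circ> h \<circ> g) (take (k + 1) (drop i xs)) = take (k + 1) (drop j xs)"
      using gig by (simp add: o_assoc comp_def)
    moreover have "gi \<circ> h \<circ> g \<in> PGL2" using comp_PGL2 gP giP h(1) by blast
    ultimately show False using sq ij unfolding sequencing_def by auto
  qed
  show ?thesis unfolding sequencing_def g_def[symmetric] using d1 s1 o1 by blast
qed

lemma card_zero: "of_nat (card (UNIV::'a::{field,finite} set)) = (0::'a)"
proof -
  have inj: "inj (\<lambda>x::'a. x + 1)" by (simp add: inj_def)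
  have surj: "(\<lambda>x::'a. x + 1) ` UNIV = UNIV"
    by (rule surjI[of _ "\<lambda>x. x - 1"]) simp
  have "sum id (UNIV::'a set) = sum id ((\<lambda>x::'a. x + 1) ` UNIV)" using surj by simp
  also have "\<dots> = sum (\<lambda>x. x + 1) (UNIV::'a set)" using sum.reindex[OF inj, of id] by simp
  also have "\<dots> = sum id UNIV + of_nat (card (UNIV::'a set))" by (simp add: sum.distrib)
  finally show ?thesis by simp
qed

lemma card_opt: "card (UNIV :: 'a::finite option set) = Suc (card (UNIV::'a set))"
proof -
  have "(UNIV :: 'a option set) = insert None (range Some)" by (metis UNIV_option_conv)
  moreover have "card (range (Some :: 'a \<Rightarrow> _)) = card (UNIV::'a set)" by (simp add: card_image)
  moreover have "None \<notin> range (Some :: 'a \<Rightarrow> _)" by auto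
  moreover have "finite (range (Some :: 'a \<Rightarrow> _))" by simp
  ultimately show ?thesis by (metis card_insert_disjoint)
qed

lemma witness:
  assumes "sequencing G k xs" "i < j" "j < length xs - k" "h \<in> G"
    "map h (take (k+1) (drop i xs)) = take (k+1) (drop j xs)"
  shows False
  using assms unfolding sequencing_def by blast

lemma normalize:
  assumes "sequencing (PGL2 :: ('a::{field,finite} option \<Rightarrow> 'a option) set) k xs"
  shows "\<exists>rest. sequencing (PGL2 :: ('a option \<Rightarrow> 'a option) set) k (None # Some 0 # Some 1 # rest)"
proof -
  have "length xs = card (UNIV :: 'a option set)" using assms unfolding sequencing_def
    by (metis distinct_card)
  also have "\<dots> \<ge> 3" unfolding card_opt
  proof -
    have "card {0::'a,1} \<le> card (UNIV::'a set)" by (rule card_mono) auto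
    then show "3 \<le> Suc (card (UNIV::'a set))" by simp
  qed
  finally obtain x1 x2 x3 rest where xs: "xs = x1 # x2 # x3 # rest"
    by (metis Suc_le_length_iff numeral_3_eq_3)
  have "x1 \<noteq> x2" "x1 \<noteq> x3" "x2 \<noteq> x3" using assms xs unfolding sequencing_def by auto
  then obtain a b c d where g: "a*d-b*c \<noteq> 0" "mobius a b c d x1 = None"
     "mobius a b c d x2 = Some 0" "mobius a b c d x3 = Some 1" using trans3 by blast
  have "sequencing PGL2 k (map (mobius a b c d) xs)" using seq_transfer[OF assms g(1)] .
  then show ?thesis using g xs by auto
qed

lemma rest_shape:
  assumes "sequencing (G :: ('a::{field,finite} option \<Rightarrow> 'a option) set) k (None # Some 0 # Some 1 # rest)"
  shows "length rest + 2 = card (UNIV::'a set)" "None \<notin> set rest" "Some 0 \<notin> set rest" "Some 1 \<notin> set rest"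
    "distinct rest" "\<And>t. t \<notin> {0,1} \<Longrightarrow> Some t \<in> set rest"
proof -
  have "length (None # Some (0::'a) # Some 1 # rest) = card (UNIV :: 'a option set)" using assms unfolding sequencing_def
    by (metis distinct_card)
  then show "length rest + 2 = card (UNIV::'a set)" unfolding card_opt by simp
  show "None \<notin> set rest" "Some 0 \<notin> set rest" "Some 1 \<notin> set rest" "distinct rest"
    using assms unfolding sequencing_def by auto
  show "Some t \<in> set rest" if "t \<notin> {0,1}" for t
  proof -
    have "Some t \<in> set (None # Some (0::'a) # Some 1 # rest)" using assms unfolding sequencing_def by auto
    then show ?thesis using that by auto
  qed
qed


lemma no_seq4:
  assumes c: "card (UNIV::'a::{field,finite} set) = 4"
  shows "\<not> sequencing (PGL2 :: ('a option \<Rightarrow> 'a option) set) 3 (None # Some 0 # Some 1 # rest)"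
proof
  assume sq: "sequencing (PGL2 :: ('a option \<Rightarrow> 'a option) set) 3 (None # Some 0 # Some 1 # rest)"
  note R = rest_shape[OF sq]
  have "length rest = 2" using R(1) c by simp
  then obtain p r where pr: "rest = [p, r]" by (auto simp: length_Suc_conv numeral_2_eq_2)
  obtain x where x: "p = Some x" using R(2) pr by (cases p) auto
  obtain y where y: "r = Some y" using R(2) pr by (cases r) auto
  have xy: "x \<noteq> 0" "x \<noteq> 1" "y \<noteq> 0" "y \<noteq> 1" "x \<noteq> y" using R(3,4,5) pr x y by auto
  have U: "t \<in> {0,1,x,y}" for t using R(6)[of t] pr x y by (cases "t \<in> {0,1}") auto
  have f: "(4::'a) = 0" using card_zero[where 'a='a] c by simp
  have e: "(2::'a) * 2 = 4" by simp
  have "(2::'a) * 2 = 0" by (simp only: e f)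
  then have two: "(2::'a) = 0" using mult_eq_0_iff by blast
  have "x + x = 2 * x" by simp
  then have xx: "x + x = 0" using two by simp
  have "x * y \<noteq> 0" "x * y \<noteq> x" "x * y \<noteq> y" using xy by auto
  then have xy1: "x * y = 1" using U[of "x*y"] by auto
  define \<gamma> where "\<gamma> = 1/x - 1"
  have g0: "\<gamma> \<noteq> 0" using xy unfolding \<gamma>_def by simp
  have g1: "\<gamma> + 1 = 1/x" unfolding \<gamma>_def by simp
  have "\<gamma> * x = 1 - x" unfolding \<gamma>_def using xy by (simp add: field_simps)
  then have "\<gamma> * x + 1 = 2 - x" by simp
  also have "\<dots> = - x" using two by simp
  also have "\<dots> = x" using xx by (simp add: add_eq_0_iff2 eq_neg_iff_add_eq_0)
  finally have g2: "\<gamma> * x + 1 = x" .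
  have yv: "1 / x = y" using xy1 xy by (simp add: field_simps)
  have xv: "1 / y = x" using xy1 xy by (simp add: field_simps)
  have "0*1 - 1*\<gamma> \<noteq> 0" using g0 by simp
  then have hP: "mobius 0 1 \<gamma> 1 \<in> PGL2" unfolding PGL2_def by blast
  have "map (mobius 0 1 \<gamma> 1) (take (3+1) (drop 0 (None # Some 0 # Some 1 # rest)))
      = take (3+1) (drop 1 (None # Some (0::'a) # Some 1 # rest))"
    using g0 g1 g2 xy yv xv by (simp add: pr x y mobius_def)
  then show False using witness[OF sq _ _ hP, of 0 1] pr by simp
qed

lemma red: "(of_nat p :: 'a::semiring_1) = 0 \<Longrightarrow> (of_nat m :: 'a) = of_nat (m mod p)"
proof -
  assume p: "(of_nat p :: 'a) = 0"
  have "(of_nat m :: 'a) = of_nat (m mod p + p * (m div p))" by simp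
  also have "\<dots> = of_nat (m mod p)" using p by (simp only: of_nat_add of_nat_mult mult_zero_left add_0_right)
  finally show ?thesis .
qed

lemma inPGL2: "a*d-b*c \<noteq> 0 \<Longrightarrow> mobius a b c d \<in> PGL2"
  unfolding PGL2_def by blast

lemma no_seq5:
  assumes c: "card (UNIV::'a::{field,finite} set) = 5"
  shows "\<not> sequencing (PGL2 :: ('a option \<Rightarrow> 'a option) set) 3 (None # Some 0 # Some 1 # rest)"
proof
  assume sq: "sequencing (PGL2 :: ('a option \<Rightarrow> 'a option) set) 3 (None # Some 0 # Some 1 # rest)"
  note R = rest_shape[OF sq]
  have "length rest = 3" using R(1) c by simp
  then obtain p r s where pr0: "rest = [p, r, s]" by (auto simp: length_Suc_conv numeral_3_eq_3)
  obtain x where x: "p = Some x" using R(2) pr0 by (cases p) auto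
  obtain y where y: "r = Some y" using R(2) pr0 by (cases r) auto
  obtain z where z: "s = Some z" using R(2) pr0 by (cases s) auto
  have pr: "rest = [Some x, Some y, Some z]" using pr0 x y z by simp
  have xyz: "x \<noteq> 0" "x \<noteq> 1" "y \<noteq> 0" "y \<noteq> 1" "z \<noteq> 0" "z \<noteq> 1" "x \<noteq> y" "x \<noteq> z" "y \<noteq> z"
    using R(3,4,5) pr by auto
  have U: "t \<in> {0,1,x,y,z}" for t using R(6)[of t] pr by (cases "t \<in> {0,1}") auto
  have five': "of_nat 5 = (0::'a)" using card_zero[where 'a='a] c by simp
  have five: "(5::'a) = 0" using five' by simp
  have n2: "(2::'a) \<noteq> 0"
  proof
    assume t: "(2::'a) = 0"
    have "(5::'a) = 2*2+1" by simp
    then have "(0::'a) = 0*0+1" by (simp only: five t)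
    then show False by simp
  qed
  have n3: "(3::'a) \<noteq> 0"
  proof
    assume t: "(3::'a) = 0"
    have "(5::'a) = 3+2" by simp
    then have "(0::'a) = 0+2" by (simp only: five t)
    then show False using n2 by simp
  qed
  have n4: "(4::'a) \<noteq> 0"
  proof
    assume t: "(4::'a) = 0"
    have "(5::'a) = 4+1" by simp
    then have "(0::'a) = 0+1" by (simp only: five t)
    then show False by simp
  qed
  have neq: "a \<noteq> b" if "a - b = e" "e \<noteq> 0" for a b e :: 'a using that by auto
  have d21: "(2::'a) \<noteq> 1" using neq[of 2 1 1] by simp
  have d31: "(3::'a) \<noteq> 1" using neq[of 3 1 2] n2 by simp
  have d41: "(4::'a) \<noteq> 1" using neq[of 4 1 3] n3 by simp
  have d32: "(3::'a) \<noteq> 2" using neq[of 3 2 1] by simp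
  have d42: "(4::'a) \<noteq> 2" using neq[of 4 2 2] n2 by simp
  have d43: "(4::'a) \<noteq> 3" using neq[of 4 3 1] by simp
  note NZ = n2 n3 n4 d21 d31 d41 d32 d42 d43 d21[symmetric] d31[symmetric] d41[symmetric]
     d32[symmetric] d42[symmetric] d43[symmetric] n2[symmetric] n3[symmetric] n4[symmetric]
  have r5: "(5::'a) = 0" using red[OF five', of 5] by simp
  have r6: "(6::'a) = 1" using red[OF five', of 6] by simp
  have r7: "(7::'a) = 2" using red[OF five', of 7] by simp
  have r8: "(8::'a) = 3" using red[OF five', of 8] by simp
  have r9: "(9::'a) = 4" using red[OF five', of 9] by simp
  have r10: "(10::'a) = 0" using red[OF five', of 10] by simp
  have r11: "(11::'a) = 1" using red[OF five', of 11] by simp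
  have r12: "(12::'a) = 2" using red[OF five', of 12] by simp
  have r13: "(13::'a) = 3" using red[OF five', of 13] by simp
  have r14: "(14::'a) = 4" using red[OF five', of 14] by simp
  have r15: "(15::'a) = 0" using red[OF five', of 15] by simp
  have r16: "(16::'a) = 1" using red[OF five', of 16] by simp
  have r17: "(17::'a) = 2" using red[OF five', of 17] by simp
  have r18: "(18::'a) = 3" using red[OF five', of 18] by simp
  have r19: "(19::'a) = 4" using red[OF five', of 19] by simp
  have r20: "(20::'a) = 0" using red[OF five', of 20] by simp
  have r21: "(21::'a) = 1" using red[OF five', of 21] by simp
  have r22: "(22::'a) = 2" using red[OF five', of 22] by simp
  have r23: "(23::'a) = 3" using red[OF five', of 23] by simp
  have r24: "(24::'a) = 4" using red[OF five', of 24] by simp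
  have r25: "(25::'a) = 0" using red[OF five', of 25] by simp
  have r26: "(26::'a) = 1" using red[OF five', of 26] by simp
  have r27: "(27::'a) = 2" using red[OF five', of 27] by simp
  have r28: "(28::'a) = 3" using red[OF five', of 28] by simp
  have r29: "(29::'a) = 4" using red[OF five', of 29] by simp
  have r30: "(30::'a) = 0" using red[OF five', of 30] by simp
  have r31: "(31::'a) = 1" using red[OF five', of 31] by simp
  have r32: "(32::'a) = 2" using red[OF five', of 32] by simp
  have r33: "(33::'a) = 3" using red[OF five', of 33] by simp
  have r34: "(34::'a) = 4" using red[OF five', of 34] by simp
  have r35: "(35::'a) = 0" using red[OF five', of 35] by simp
  have r36: "(36::'a) = 1" using red[OF five', of 36] by simp
  have r37: "(37::'a) = 2" using red[OF five', of 37] by simp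
  have r38: "(38::'a) = 3" using red[OF five', of 38] by simp
  have r39: "(39::'a) = 4" using red[OF five', of 39] by simp
  have r40: "(40::'a) = 0" using red[OF five', of 40] by simp
  note RED = five r5 r6 r7 r8 r9 r10 r11 r12 r13 r14 r15 r16 r17 r18 r19 r20 r21 r22 r23 r24 r25 r26 r27 r28 r29 r30 r31 r32 r33 r34 r35 r36 r37 r38 r39 r40
  have i2: "2 \<in> {x,y,z}" using U[of 2] NZ by auto
  have i3: "3 \<in> {x,y,z}" using U[of 3] NZ by auto
  have i4: "4 \<in> {x,y,z}" using U[of 4] NZ by auto
  have cs: "(x,y,z) \<in> {(2,3,4),(2,4,3),(3,2,4),(3,4,2),(4,2,3),(4,3,2)}"
    using i2 i3 i4 xyz NZ by auto
  have C0: "False" if "x = 2" "y = 3" "z = 4"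
  proof -
    have hP: "mobius 1 1 0 1 \<in> (PGL2 :: ('a option \<Rightarrow> 'a option) set)"
      by (rule inPGL2) (simp add: NZ)
    have "map (mobius (1::'a) 1 0 1) (take (3+1) (drop 1 (None # Some 0 # Some 1 # rest)))
      = take (3+1) (drop 2 (None # Some (0::'a) # Some 1 # rest))"
      using that by (simp add: pr mobius_def RED NZ divide_eq_eq)
    then show False using witness[OF sq _ _ hP, of 1 2] pr by simp
  qed
  have C1: "False" if "x = 2" "y = 4" "z = 3"
  proof -
    have hP: "mobius 1 2 1 1 \<in> (PGL2 :: ('a option \<Rightarrow> 'a option) set)"
      by (rule inPGL2) (simp add: NZ)
    have "map (mobius (1::'a) 2 1 1) (take (3+1) (drop 0 (None # Some 0 # Some 1 # rest)))
      = take (3+1) (drop 2 (None # Some (0::'a) # Some 1 # rest))"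
      using that by (simp add: pr mobius_def RED NZ divide_eq_eq)
    then show False using witness[OF sq _ _ hP, of 0 2] pr by simp
  qed
  have C2: "False" if "x = 3" "y = 2" "z = 4"
  proof -
    have hP: "mobius 1 3 1 1 \<in> (PGL2 :: ('a option \<Rightarrow> 'a option) set)"
      by (rule inPGL2) (simp add: NZ)
    have "map (mobius (1::'a) 3 1 1) (take (3+1) (drop 0 (None # Some 0 # Some 1 # rest)))
      = take (3+1) (drop 2 (None # Some (0::'a) # Some 1 # rest))"
      using that by (simp add: pr mobius_def RED NZ divide_eq_eq)
    then show False using witness[OF sq _ _ hP, of 0 2] pr by simp
  qed
  have C3: "False" if "x = 3" "y = 4" "z = 2"
  proof -
    have hP: "mobius 0 1 1 1 \<in> (PGL2 :: ('a option \<Rightarrow> 'a option) set)"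
      by (rule inPGL2) (simp add: NZ)
    have "map (mobius (0::'a) 1 1 1) (take (3+1) (drop 0 (None # Some 0 # Some 1 # rest)))
      = take (3+1) (drop 1 (None # Some (0::'a) # Some 1 # rest))"
      using that by (simp add: pr mobius_def RED NZ divide_eq_eq)
    then show False using witness[OF sq _ _ hP, of 0 1] pr by simp
  qed
  have C4: "False" if "x = 4" "y = 2" "z = 3"
  proof -
    have hP: "mobius 0 1 3 1 \<in> (PGL2 :: ('a option \<Rightarrow> 'a option) set)"
      by (rule inPGL2) (simp add: NZ)
    have "map (mobius (0::'a) 1 3 1) (take (3+1) (drop 0 (None # Some 0 # Some 1 # rest)))
      = take (3+1) (drop 1 (None # Some (0::'a) # Some 1 # rest))"
      using that by (simp add: pr mobius_def RED NZ divide_eq_eq)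
    then show False using witness[OF sq _ _ hP, of 0 1] pr by simp
  qed
  have C5: "False" if "x = 4" "y = 3" "z = 2"
  proof -
    have hP: "mobius 1 3 1 2 \<in> (PGL2 :: ('a option \<Rightarrow> 'a option) set)"
      by (rule inPGL2) (simp add: NZ)
    have "map (mobius (1::'a) 3 1 2) (take (3+1) (drop 0 (None # Some 0 # Some 1 # rest)))
      = take (3+1) (drop 2 (None # Some (0::'a) # Some 1 # rest))"
      using that by (simp add: pr mobius_def RED NZ divide_eq_eq)
    then show False using witness[OF sq _ _ hP, of 0 2] pr by simp
  qed
  show False using cs C0 C1 C2 C3 C4 C5 by auto
qed

theorem mainTheorem5:
  assumes "card (UNIV :: 'a::{field, finite} set) = 4 \<or> card (UNIV :: 'a set) = 5"
  shows "\<not> (\<exists>xs. sequencing (PGL2 :: ('a option \<Rightarrow> 'a option) set) 3 xs)"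
proof
  assume "\<exists>xs. sequencing (PGL2 :: ('a option \<Rightarrow> 'a option) set) 3 xs"
  then obtain xs where "sequencing (PGL2 :: ('a option \<Rightarrow> 'a option) set) 3 xs" by blast
  then obtain rest where "sequencing (PGL2 :: ('a option \<Rightarrow> 'a option) set) 3 (None # Some 0 # Some 1 # rest)"
    using normalize by blast
  then show False using assms no_seq4 no_seq5 by blast
qed

end
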